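(* Let $h\in\mathcal H$, $k_0=k_0(h)$, $h_0=h(k_0)$, and let $d>h_0$ be an integer. If $h(k)\ge (d-k+1)\,h(k-1)$ for all integers $k$ with $k_0+1\le k\le d$, then $\operatorname{hdepth}(h)\ge d$.
   Context: $\mathcal H$ denotes the set of nonzero functions $h:\mathbb Z\to\mathbb Z_{\ge 0}$ such that $h(j)=0$ for all sufficiently negative $j$. For $h\in\mathcal H$ and integers $k\le d$, set $\beta_k^d(h)=\sum_{j\le k}(-1)^{k-j}\binom{d-j}{k-j}h(j)$, and $\operatorname{hdepth}(h)=\max\{d\in\mathbb Z:\ \beta_k^d(h)\ge 0\text{ for all integers }k\le d\}$. Also $k_0(h)=\min\{j: h(j)>0\}$. *)

theory Defs
  imports Main
begin

definition hclass :: "(int \<Rightarrow> nat) set" where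
  "hclass = {h. h \<noteq> (\<lambda>_. 0) \<and> (\<exists>m. \<forall>j\<le>m. h j = 0)}"

text \<open>beta_k^d(h) = sum_{j<=k} (-1)^(k-j) binom(d-j, k-j) h(j), intended for k <= d.
  The sum ranges over the (finite, for h in H) set of j <= k with h j nonzero;
  the omitted terms are zero.\<close>
definition beta :: "(int \<Rightarrow> nat) \<Rightarrow> int \<Rightarrow> int \<Rightarrow> int" where
  "beta h d k = (\<Sum>j\<in>{j. j \<le> k \<and> h j \<noteq> 0}.
      (-1) ^ nat (k - j) * int (nat (d - j) choose nat (k - j)) * int (h j))"

definition hdepth :: "(int \<Rightarrow> nat) \<Rightarrow> int" where
  "hdepth h = (GREATEST d. \<forall>k\<le>d. beta h d k \<ge> 0)"

definition k0 :: "(int \<Rightarrow> nat) \<Rightarrow> int" where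
  "k0 h = (LEAST j. h j > 0)"

end

theory Submission
  imports Defs
begin

lemma alt_sum:
  fixes b :: "nat \<Rightarrow> int"
  shows "(\<forall>i<n. b (Suc i) \<le> b i) \<Longrightarrow> (\<forall>i\<le>n. 0 \<le> b i) \<Longrightarrow>
    0 \<le> (\<Sum>i\<le>n. (-1)^i * b i) \<and> (\<Sum>i\<le>n. (-1)^i * b i) \<le> b 0"
proof (induction n arbitrary: b)
  case 0
  then show ?case by simp
next
  case (Suc n)
  have IH: "0 \<le> (\<Sum>i\<le>n. (-1)^i * b (Suc i)) \<and> (\<Sum>i\<le>n. (-1)^i * b (Suc i)) \<le> b 1"
    using Suc.IH[of "\<lambda>i. b (Suc i)"] Suc.prems by auto
  have eq: "(\<Sum>i\<le>Suc n. (-1)^i * b i) = b 0 - (\<Sum>i\<le>n. (-1)^i * b (Suc i))"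
    by (simp only: sum.atMost_Suc_shift) (simp add: sum_negf)
  have "b 1 \<le> b 0" using Suc.prems(1) by auto
  then show ?case using IH eq by linarith
qed

lemma binom_bound: "(Suc m choose Suc i) \<le> Suc m * (m choose i)"
proof -
  have "Suc m * (m choose i) = (Suc m choose Suc i) * Suc i" by (rule Suc_times_binomial_eq)
  then show ?thesis by (metis le_add1 mult.commute mult_Suc_right)
qed

lemma beta_range:
  assumes fin: "\<forall>j. j < a \<longrightarrow> h j = 0"
  shows "beta h d k = (\<Sum>j\<in>{a..k}. (-1) ^ nat (k - j) * int (nat (d - j) choose nat (k - j)) * int (h j))"
  unfolding beta_def
proof (rule sum.mono_neutral_cong_left)
  show "finite {a..k}" by simp
  show "{j. j \<le> k \<and> h j \<noteq> 0} \<subseteq> {a..k}" using fin by (auto simp: not_less[symmetric])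
  show "\<forall>i\<in>{a..k} - {j. j \<le> k \<and> h j \<noteq> 0}.
     (-1) ^ nat (k - i) * int (nat (d - i) choose nat (k - i)) * int (h i) = 0" by auto
qed auto

theorem proposition1p8:
  fixes h :: "int \<Rightarrow> nat" and d :: int
  assumes "h \<in> hclass"
    and "d > int (h (k0 h))"
    and "\<And>k. k0 h + 1 \<le> k \<Longrightarrow> k \<le> d \<Longrightarrow> h k \<ge> nat (d - k + 1) * h (k - 1)"
  shows "hdepth h \<ge> d"
proof -
  obtain m where m: "\<forall>j\<le>m. h j = 0" and nz: "h \<noteq> (\<lambda>_. 0)" using assms(1) unfolding hclass_def by auto
  obtain j1 where j1: "h j1 > 0" using nz by auto
  have j1m: "j1 > m" using m j1 by (metis less_numeral_extra(3) not_less)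
  define n0 where "n0 = (LEAST n::nat. h (m + int n) > 0)"
  have ex: "h (m + int (nat (j1 - m))) > 0" using j1 j1m by simp
  have n0p: "h (m + int n0) > 0" unfolding n0_def using ex by (rule LeastI)
  have n0min: "\<And>n. h (m + int n) > 0 \<Longrightarrow> n0 \<le> n" unfolding n0_def by (rule Least_le)
  have below: "\<And>j. j < m + int n0 \<Longrightarrow> h j = 0"
  proof -
    fix j assume "j < m + int n0"
    show "h j = 0"
    proof (cases "j \<le> m")
      case True then show ?thesis using m by auto
    next
      case False
      then have "j = m + int (nat (j - m))" by simp
      moreover have "nat (j - m) < n0" using \<open>j < m + int n0\<close> False by simp
      ultimately have "\<not> h (m + int (nat (j - m))) > 0" using n0min not_le by blast
      then show ?thesis using \<open>j = m + int (nat (j - m))\<close> by simp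
    qed
  qed
  have K0: "k0 h = m + int n0" unfolding k0_def
  proof (rule Least_equality)
    show "0 < h (m + int n0)" by (rule n0p)
    show "\<And>y. 0 < h y \<Longrightarrow> m + int n0 \<le> y" using below by (metis less_numeral_extra(3) not_less)
  qed
  define a where "a = k0 h"
  have ha: "h a > 0" using n0p K0 a_def by simp
  have fin: "\<forall>j. j < a \<longrightarrow> h j = 0" using below K0 a_def by simp
  have hyp: "\<And>k. a + 1 \<le> k \<Longrightarrow> k \<le> d \<Longrightarrow> h k \<ge> nat (d - k + 1) * h (k - 1)"
    using assms(3) a_def by simp
  have Pd: "\<forall>k\<le>d. beta h d k \<ge> 0"
  proof (intro allI impI)
    fix k assume kd: "k \<le> d"
    show "beta h d k \<ge> 0"
    proof (cases "k < a")
      case True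
      then show ?thesis using beta_range[OF fin, of d k] by simp
    next
      case False
      define n where "n = nat (k - a)"
      define b where "b = (\<lambda>i. int ((nat (d - k) + i choose i) * h (k - int i)))"
      have "beta h d k = (\<Sum>j\<in>{a..k}. (-1) ^ nat (k - j) * int (nat (d - j) choose nat (k - j)) * int (h j))"
        by (rule beta_range[OF fin])
      also have "\<dots> = (\<Sum>i\<le>n. (-1)^i * b i)"
      proof (rule sum.reindex_bij_witness[where j="\<lambda>j. nat (k-j)" and i="\<lambda>i. k - int i"])
        fix j assume "j \<in> {a..k}"
        then show "k - int (nat (k - j)) = j" by simp
      next
        fix j assume "j \<in> {a..k}"
        then show "nat (k - j) \<in> {..n}" by (auto simp: n_def)
      next
        fix i assume "i \<in> {..n}"
        then show "nat (k - (k - int i)) = i" by simp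
      next
        fix i assume "i \<in> {..n}"
        then show "k - int i \<in> {a..k}" using False by (auto simp: n_def)
      next
        fix j assume j: "j \<in> {a..k}"
        have e1: "nat (d - j) = nat (d - k) + nat (k - j)" using kd j by (simp add: nat_add_distrib[symmetric])
        have e2: "k - int (nat (k - j)) = j" using j by simp
        show "(-1)^(nat (k - j)) * b (nat (k - j)) = (-1) ^ nat (k - j) * int (nat (d - j) choose nat (k - j)) * int (h j)"
          using j by (simp add: b_def e1 e2)
      qed
      also have "\<dots> \<ge> 0"
      proof -
        have mono: "\<forall>i<n. b (Suc i) \<le> b i"
        proof (intro allI impI)
          fix i assume i: "i < n"
          define j where "j = k - int i"
          define M where "M = nat (d - k) + i"
          have j1: "a + 1 \<le> j" "j \<le> d" using i kd False by (auto simp: j_def n_def)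
          have hj: "h j \<ge> Suc M * h (j - 1)"
          proof -
            have "nat (d - j + 1) = Suc M" using kd by (simp add: M_def j_def)
            then show ?thesis using hyp[OF j1] by simp
          qed
          have "(Suc M choose Suc i) * h (j - 1) \<le> (Suc M * (M choose i)) * h (j - 1)"
            using binom_bound by (rule mult_right_mono) simp
          also have "\<dots> = (M choose i) * (Suc M * h (j - 1))" by (simp only: mult_ac)
          also have "\<dots> \<le> (M choose i) * h j" using hj by (rule mult_left_mono) simp
          finally have "(Suc M choose Suc i) * h (j - 1) \<le> (M choose i) * h j" .
          moreover have "k - int (Suc i) = j - 1" by (simp add: j_def)
          moreover have "b (Suc i) = int ((Suc M choose Suc i) * h (k - int (Suc i)))"
            by (simp only: b_def M_def add_Suc_right)
          moreover have "b i = int ((M choose i) * h j)" by (simp only: b_def M_def j_def)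
          ultimately show "b (Suc i) \<le> b i" by (simp only: of_nat_le_iff)
        qed
        have pos: "\<forall>i\<le>n. 0 \<le> b i" by (simp add: b_def)
        show ?thesis using alt_sum[OF mono pos] by simp
      qed
      finally show ?thesis .
    qed
  qed
  have bound: "\<And>d'. (\<forall>k\<le>d'. beta h d' k \<ge> 0) \<Longrightarrow> d' \<le> a + int (h (a+1))"
  proof (rule ccontr)
    fix d' assume P: "\<forall>k\<le>d'. beta h d' k \<ge> 0" and nb: "\<not> d' \<le> a + int (h (a+1))"
    have "beta h d' (a+1) \<ge> 0" using P nb by simp
    moreover have "beta h d' (a+1) = (\<Sum>j\<in>{a..a+1}. (-1) ^ nat (a + 1 - j) * int (nat (d' - j) choose nat (a + 1 - j)) * int (h j))"
      by (rule beta_range[OF fin])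
    moreover have "{a..a+1} = {a, a+1}" by auto
    ultimately have "0 \<le> - (int (nat (d' - a)) * int (h a)) + int (h (a+1))" by simp
    moreover have "int (nat (d' - a)) = d' - a" using nb by simp
    ultimately have "(d' - a) * int (h a) \<le> int (h (a+1))" by simp
    moreover have "(d' - a) * 1 \<le> (d' - a) * int (h a)" using ha nb by (intro mult_left_mono) auto
    ultimately show False using nb by (simp only: mult_1_right)
  qed
  define S where "S = {d'\<in>{d..a + int (h (a+1))}. \<forall>k\<le>d'. beta h d' k \<ge> 0}"
  have dS: "d \<in> S" using Pd bound[OF Pd] by (simp add: S_def)
  have finS: "finite S" unfolding S_def by (rule finite_subset[OF _ finite_atLeastAtMost_int]) auto
  define g where "g = Max S"
  have gS: "g \<in> S" using dS finS g_def Max_in by blast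
  have dg: "d \<le> g" using dS finS g_def by simp
  have "hdepth h = g" unfolding hdepth_def
  proof (rule Greatest_equality)
    show "\<forall>k\<le>g. beta h g k \<ge> 0" using gS by (simp add: S_def)
    fix y assume y: "\<forall>k\<le>y. beta h y k \<ge> 0"
    show "y \<le> g"
    proof (cases "y < d")
      case True then show ?thesis using dg by simp
    next
      case False
      then have "y \<in> S" using y bound[OF y] by (simp add: S_def)
      then show ?thesis using finS g_def by simp
    qed
  qed
  then show ?thesis using dg by simp
qed

end
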